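(* Let $(\phi,y)$ be feasible for the joint routing and caching problem (minimize $T(\phi,y)=\sum_{(i,j)\in\mathcal E}D_{ij}(F_{ij})+\sum_i B_i(Y_i)$ subject to $\phi_{ij}(k),y_i(k)\in[0,1]$ and flow conservation), and suppose that for all $i\in\mathcal V,k\in\mathcal C$, with $$\delta_i(k)=\min\Big\{\frac{B_i'(Y_i)}{t_i(k)},\ \min_{j\in\mathcal N(i)}\Big(D'_{ji}(F_{ji})+\frac{\partial T}{\partial r_j(k)}\Big)\Big\}$$ (where $B_i'(Y_i)/t_i(k):=\infty$ if $t_i(k)=0$), we have: $B_i'(Y_i)=t_i(k)\delta_i(k)$ if $y_i(k)>0$ and $B_i'(Y_i)\ge t_i(k)\delta_i(k)$ if $y_i(k)=0$; and for all $j\in\mathcal N(i)$, $D'_{ji}(F_{ji})+\frac{\partial T}{\partial r_j(k)}=\delta_i(k)$ if $\phi_{ij}(k)>0$ and $\ge\delta_i(k)$ if $\phi_{ij}(k)=0$. Then for every feasible $(\phi^\dagger,y^\dagger)$ (with arrival rates $t^\dagger$), $$T(\phi^\dagger,y^\dagger)-T(\phi,y)\ \ge\ \sum_{i\in\mathcal V}\sum_{k\in\mathcal C}\delta_i(k)\big(y_i(k)-y_i^\dagger(k)\big)\big(t_i^\dagger(k)-t_i(k)\big).$$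
   Context: Network model. $\mathcal G=(\mathcal V,\mathcal E)$ is a finite directed graph with $(j,i)\in\mathcal E$ whenever $(i,j)\in\mathcal E$; $\mathcal N(i)=\{j:(i,j)\in\mathcal E\}$. $\mathcal C$ is a finite catalog; item $k$ has nonempty designated server set $\mathcal S_k\subseteq\mathcal V$. Exogenous request rates $r_i(k)\ge0$. Variables: $\phi_{ij}(k)\in[0,1]$ with $\phi_{ij}(k)=0$ if $(i,j)\notin\mathcal E$, and $y_i(k)\in[0,1]$. Flow conservation: $y_i(k)+\sum_{j}\phi_{ij}(k)=1$ if $i\notin\mathcal S_k$ and $=0$ if $i\in\mathcal S_k$. A pair $(\phi,y)$ is feasible if it satisfies these constraints and the arrival rates $t_i(k)$, solving $t_i(k)=r_i(k)+\sum_j t_j(k)\phi_{ji}(k)$, are uniquely determined and nonnegative (e.g. when $\phi$ is loop-free, i.e. for each $k$ the graph with edges $\{(i,j):\phi_{ij}(k)>0\}$ is acyclic). $f_{ji}(k)=t_i(k)\phi_{ij}(k)$, $F_{ij}=\sum_k f_{ij}(k)$, $Y_i=\sum_k y_i(k)$. $D_{ij},B_i$ are continuously differentiable, increasing, convex, zero at $0$. The marginal cost $\frac{\partial T}{\partial r_i(k)}$ satisfies $\frac{\partial T}{\partial r_i(k)}=\sum_{j\in\mathcal N(i)}\phi_{ij}(k)\big(D'_{ji}(F_{ji})+\frac{\partial T}{\partial r_j(k)}\big)$, and equals $0$ if $i\in\mathcal S_k$ or $y_i(k)=1$. *)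

theory Defs
  imports "HOL-Analysis.Analysis"
begin

definition nbrs :: "('v \<times> 'v) set \<Rightarrow> 'v \<Rightarrow> 'v set" where
  "nbrs E i = {j. (i, j) \<in> E}"

definition link_flow :: "'k set \<Rightarrow> ('v \<Rightarrow> 'k \<Rightarrow> real) \<Rightarrow> ('v \<Rightarrow> 'v \<Rightarrow> 'k \<Rightarrow> real)
    \<Rightarrow> 'v \<Rightarrow> 'v \<Rightarrow> real" where
  "link_flow C t phi a b = (\<Sum>k\<in>C. t b k * phi b a k)"

definition cache_total :: "'k set \<Rightarrow> ('v \<Rightarrow> 'k \<Rightarrow> real) \<Rightarrow> 'v \<Rightarrow> real" where
  "cache_total C y i = (\<Sum>k\<in>C. y i k)"

definition total_cost :: "'v set \<Rightarrow> ('v \<times> 'v) set \<Rightarrow> 'k set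
    \<Rightarrow> ('v \<Rightarrow> 'v \<Rightarrow> real \<Rightarrow> real) \<Rightarrow> ('v \<Rightarrow> real \<Rightarrow> real)
    \<Rightarrow> ('v \<Rightarrow> 'k \<Rightarrow> real) \<Rightarrow> ('v \<Rightarrow> 'v \<Rightarrow> 'k \<Rightarrow> real) \<Rightarrow> ('v \<Rightarrow> 'k \<Rightarrow> real) \<Rightarrow> real" where
  "total_cost V E C D B t phi y =
     (\<Sum>(i,j)\<in>E. D i j (link_flow C t phi i j)) + (\<Sum>i\<in>V. B i (cache_total C y i))"

definition solves_arrival :: "'v set \<Rightarrow> ('v \<Rightarrow> 'k \<Rightarrow> real) \<Rightarrow> ('v \<Rightarrow> 'v \<Rightarrow> 'k \<Rightarrow> real)
    \<Rightarrow> 'k \<Rightarrow> ('v \<Rightarrow> real) \<Rightarrow> bool" where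
  "solves_arrival V r phi k s \<longleftrightarrow> (\<forall>i\<in>V. s i = r i k + (\<Sum>j\<in>V. s j * phi j i k))"

definition arrival_rates :: "'v set \<Rightarrow> 'k set \<Rightarrow> ('v \<Rightarrow> 'k \<Rightarrow> real)
    \<Rightarrow> ('v \<Rightarrow> 'v \<Rightarrow> 'k \<Rightarrow> real) \<Rightarrow> ('v \<Rightarrow> 'k \<Rightarrow> real) \<Rightarrow> bool" where
  "arrival_rates V C r phi t \<longleftrightarrow> (\<forall>k\<in>C. solves_arrival V r phi k (\<lambda>i. t i k))"

definition feasible :: "'v set \<Rightarrow> ('v \<times> 'v) set \<Rightarrow> 'k set \<Rightarrow> ('k \<Rightarrow> 'v set)
    \<Rightarrow> ('v \<Rightarrow> 'k \<Rightarrow> real) \<Rightarrow> ('v \<Rightarrow> 'v \<Rightarrow> 'k \<Rightarrow> real) \<Rightarrow> ('v \<Rightarrow> 'k \<Rightarrow> real) \<Rightarrow> bool" where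
  "feasible V E C S r phi y \<longleftrightarrow>
     (\<forall>k\<in>C. \<forall>i j. 0 \<le> phi i j k \<and> phi i j k \<le> 1 \<and> ((i, j) \<notin> E \<longrightarrow> phi i j k = 0)) \<and>
     (\<forall>k\<in>C. \<forall>i\<in>V. 0 \<le> y i k \<and> y i k \<le> 1) \<and>
     (\<forall>k\<in>C. \<forall>i\<in>V. y i k + (\<Sum>j\<in>V. phi i j k) = (if i \<in> S k then 0 else 1)) \<and>
     (\<forall>k\<in>C. (\<exists>s. solves_arrival V r phi k s) \<and>
        (\<forall>s s'. solves_arrival V r phi k s \<longrightarrow> solves_arrival V r phi k s' \<longrightarrow> (\<forall>i\<in>V. s i = s' i)) \<and>
        (\<forall>s. solves_arrival V r phi k s \<longrightarrow> (\<forall>i\<in>V. 0 \<le> s i)))"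

definition delta :: "('v \<times> 'v) set \<Rightarrow> 'k set \<Rightarrow> ('v \<Rightarrow> 'v \<Rightarrow> real \<Rightarrow> real) \<Rightarrow> ('v \<Rightarrow> real \<Rightarrow> real)
    \<Rightarrow> ('v \<Rightarrow> 'k \<Rightarrow> real) \<Rightarrow> ('v \<Rightarrow> 'v \<Rightarrow> 'k \<Rightarrow> real) \<Rightarrow> ('v \<Rightarrow> 'k \<Rightarrow> real)
    \<Rightarrow> ('v \<Rightarrow> 'k \<Rightarrow> real) \<Rightarrow> 'v \<Rightarrow> 'k \<Rightarrow> ereal" where
  "delta E C D' B' t phi y dT i k =
     min (if t i k = 0 then \<infinity> else ereal (B' i (cache_total C y i) / t i k))
         (INF j\<in>nbrs E i. ereal (D' j i (link_flow C t phi j i) + dT j k))"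

end

theory Submission
  imports Defs
begin

lemma tangent0:
  fixes f :: "real \<Rightarrow> real"
  assumes conv: "convex_on {0..} f" and d: "(f has_real_derivative f') (at 0 within {0..})"
    and x: "0 < x"
  shows "f' * x \<le> f x - f 0"
proof -
  let ?A' = "{0::real<..}"
  have nb: "at 0 within ?A' \<noteq> bot" by (simp add: at_within_eq_bot_iff)
  have "((\<lambda>y. (f y - f 0) / (y - 0)) \<longlongrightarrow> f') (at 0 within ?A')"
    using d unfolding has_field_derivative_iff by (rule tendsto_mono[rotated]) (intro at_le, auto)
  moreover have "eventually (\<lambda>y. (f y - f 0) / (y - 0) \<le> (f x - f 0) / (x - 0)) (at_right 0)"
    using eventually_at_right_real[OF x]
  proof eventually_elim
    fix y assume y: "y \<in> {0<..<x}"
    have "convex_on {0..x} f" using conv by (rule convex_on_subset) auto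
    hence "f y \<le> (f x - f 0) / (x - 0) * (y - 0) + f 0"
      using y by (intro convex_onD_Icc') auto
    hence "f y - f 0 \<le> (f x - f 0) / x * y" by simp
    thus "(f y - f 0) / (y - 0) \<le> (f x - f 0) / (x - 0)" using y x by (simp add: field_split_simps)
  qed
  ultimately have "f' \<le> (f x - f 0) / (x - 0)" using nb by (simp add: tendsto_upperbound)
  thus ?thesis using x by (simp add: field_simps)
qed

lemma tangent:
  fixes f :: "real \<Rightarrow> real"
  assumes conv: "convex_on {0..} f" and d: "(f has_real_derivative f') (at c within {0..})"
    and c: "0 \<le> c" and x: "0 \<le> x"
  shows "f' * (x - c) \<le> f x - f c"
proof (cases "c = 0")
  case True
  then show ?thesis using tangent0[OF conv _, of f' x] d x by (cases "x = 0") auto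
next
  case False
  have "interior {0::real..} = {0<..}" by simp
  then show ?thesis using False c x
    by (intro convex_on_imp_above_tangent[OF conv] d) auto
qed

lemma inf_ne_minf:
  fixes f :: "'a \<Rightarrow> real"
  assumes "finite A"
  shows "(INF j\<in>A. ereal (f j)) \<noteq> -\<infinity>"
proof (cases "A = {}")
  case True then show ?thesis by simp
next
  case False
  have "ereal (Min (f ` A)) \<le> (INF j\<in>A. ereal (f j))"
    using assms by (intro INF_greatest) auto
  then show ?thesis by auto
qed

lemma key_identity:
  fixes V :: "'v set" and t t2 r d :: "'v \<Rightarrow> real" and p p2 a :: "'v \<Rightarrow> 'v \<Rightarrow> real"
  assumes fin: "finite V"
  and ht: "\<forall>i\<in>V. t i = r i + (\<Sum>j\<in>V. t j * p j i)"
  and ht2: "\<forall>i\<in>V. t2 i = r i + (\<Sum>j\<in>V. t2 j * p2 j i)"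
  and hd: "\<forall>i\<in>V. d i = (\<Sum>j\<in>V. p i j * (a j i + d j))"
  shows "(\<Sum>i\<in>V. \<Sum>j\<in>V. a j i * (t2 i * p2 i j - t i * p i j))
       = (\<Sum>i\<in>V. t2 i * ((\<Sum>j\<in>V. p2 i j * (a j i + d j)) - d i))"
proof -
  have gen: "(\<Sum>i\<in>V. sum (\<lambda>j. s i * q i j * (a j i + d j)) V)
      = (\<Sum>i\<in>V. \<Sum>j\<in>V. a j i * (s i * q i j)) + (\<Sum>j\<in>V. d j * (s j - r j))"
    if hs: "\<forall>i\<in>V. s i = r i + (\<Sum>j\<in>V. s j * q j i)" for s q
  proof -
    have "(\<Sum>i\<in>V. sum (\<lambda>j. s i * q i j * (a j i + d j)) V)
        = (\<Sum>i\<in>V. \<Sum>j\<in>V. a j i * (s i * q i j)) + (\<Sum>i\<in>V. \<Sum>j\<in>V. s i * q i j * d j)"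
      by (simp add: algebra_simps sum.distrib)
    also have "(\<Sum>i\<in>V. \<Sum>j\<in>V. s i * q i j * d j) = (\<Sum>j\<in>V. d j * (\<Sum>i\<in>V. s i * q i j))"
      by (subst sum.swap) (simp add: sum_distrib_left algebra_simps)
    also have "\<dots> = (\<Sum>j\<in>V. d j * (s j - r j))"
      using hs by (intro sum.cong) auto
    finally show ?thesis .
  qed
  have e1: "(\<Sum>i\<in>V. t i * d i) = (\<Sum>i\<in>V. sum (\<lambda>j. t i * p i j * (a j i + d j)) V)"
    using hd by (intro sum.cong) (auto simp: sum_distrib_left mult.assoc)
  have e2: "(\<Sum>i\<in>V. t2 i * (\<Sum>j\<in>V. p2 i j * (a j i + d j))) = (\<Sum>i\<in>V. sum (\<lambda>j. t2 i * p2 i j * (a j i + d j)) V)"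
    by (simp add: sum_distrib_left mult.assoc)
  note g1 = gen[OF ht] and g2 = gen[OF ht2]
  have "(\<Sum>i\<in>V. \<Sum>j\<in>V. a j i * (t2 i * p2 i j - t i * p i j))
      = (\<Sum>i\<in>V. \<Sum>j\<in>V. a j i * (t2 i * p2 i j)) - (\<Sum>i\<in>V. \<Sum>j\<in>V. a j i * (t i * p i j))"
    by (simp add: right_diff_distrib sum_subtractf)
  moreover have "(\<Sum>i\<in>V. t2 i * ((\<Sum>j\<in>V. p2 i j * (a j i + d j)) - d i))
      = (\<Sum>i\<in>V. t2 i * (\<Sum>j\<in>V. p2 i j * (a j i + d j))) - (\<Sum>i\<in>V. t2 i * d i)"
    by (simp add: right_diff_distrib sum_subtractf)
  moreover have "(\<Sum>j\<in>V. d j * (t2 j - r j)) = (\<Sum>j\<in>V. t2 j * d j) - (\<Sum>j\<in>V. d j * r j)"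
    by (simp add: right_diff_distrib sum_subtractf mult.commute)
  moreover have "(\<Sum>j\<in>V. d j * (t j - r j)) = (\<Sum>j\<in>V. t j * d j) - (\<Sum>j\<in>V. d j * r j)"
    by (simp add: right_diff_distrib sum_subtractf mult.commute)
  ultimately show ?thesis using e1 e2 g1 g2 by linarith
qed

lemma local_ineq:
  fixes \<delta> :: ereal and N :: "'v set" and p p2 c :: "'v \<Rightarrow> real"
  assumes fin: "finite N"
    and p0: "\<forall>j\<in>N. 0 \<le> p j" and p20: "\<forall>j\<in>N. 0 \<le> p2 j"
    and t0: "0 \<le> t" and t20: "0 \<le> t2" and y0: "0 \<le> y" and y20: "0 \<le> y2"
    and sp: "sum p N = s - y" and sp2: "sum p2 N = s - y2"
    and dd: "d = (\<Sum>j\<in>N. p j * c j)"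
    and rp: "\<forall>j\<in>N. p j > 0 \<longrightarrow> ereal (c j) = \<delta>"
    and rz: "\<forall>j\<in>N. p j = 0 \<longrightarrow> ereal (c j) \<ge> \<delta>"
    and cp: "y > 0 \<longrightarrow> ereal b = ereal t * \<delta>"
    and cz: "y = 0 \<longrightarrow> ereal b \<ge> ereal t * \<delta>"
    and nm: "\<delta> \<noteq> -\<infinity>"
  shows "\<delta> * ereal ((y - y2) * (t2 - t)) \<le> ereal (t2 * ((\<Sum>j\<in>N. p2 j * c j) - d) + b * (y2 - y))"
proof (cases \<delta>)
  case PInf
  have "N = {}"
  proof (rule ccontr)
    assume "N \<noteq> {}" then obtain j where j: "j \<in> N" by auto
    show False using rp[rule_format, OF j] rz[rule_format, OF j] p0[rule_format, OF j] PInf by (cases "p j > 0") auto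
  qed
  then show ?thesis using sp sp2 dd by (simp add: zero_ereal_def[symmetric])
next
  case MInf then show ?thesis using nm by simp
next
  case (real e)
  have cge: "\<forall>j\<in>N. e \<le> c j"
  proof
    fix j assume j: "j \<in> N"
    show "e \<le> c j" using rp rz p0 j real by (cases "p j > 0") auto
  qed
  have "d = (\<Sum>j\<in>N. p j * e)"
    unfolding dd
  proof (intro sum.cong refl)
    fix j assume j: "j \<in> N"
    show "p j * c j = p j * e" using rp p0 j real by (cases "p j > 0") auto
  qed
  hence d2: "d = e * (s - y)" using sp by (simp add: sum_distrib_left[symmetric] mult.commute)
  have "(\<Sum>j\<in>N. p2 j * e) \<le> (\<Sum>j\<in>N. p2 j * c j)"
    using cge p20 by (intro sum_mono mult_left_mono) auto
  hence s2: "e * (s - y2) \<le> (\<Sum>j\<in>N. p2 j * c j)"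
    using sp2 by (simp add: sum_distrib_left[symmetric] mult.commute)
  have bb: "t * e * (y2 - y) \<le> b * (y2 - y)"
  proof (cases "y > 0")
    case True then show ?thesis using cp real by simp
  next
    case False
    then have "y = 0" using y0 by simp
    then show ?thesis using cz real y20 by (simp add: mult_right_mono)
  qed
  have "t2 * (e * (y - y2)) \<le> t2 * ((\<Sum>j\<in>N. p2 j * c j) - d)"
    using s2 d2 t20 by (intro mult_left_mono) (auto simp: algebra_simps)
  with bb have "e * ((y - y2) * (t2 - t)) \<le> t2 * ((\<Sum>j\<in>N. p2 j * c j) - d) + b * (y2 - y)"
    by (simp add: algebra_simps)
  then show ?thesis using real by simp
qed

theorem theorem3:
  fixes V :: "'v set" and E :: "('v \<times> 'v) set" and C :: "'k set"
    and S :: "'k \<Rightarrow> 'v set" and r :: "'v \<Rightarrow> 'k \<Rightarrow> real"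
    and D D' :: "'v \<Rightarrow> 'v \<Rightarrow> real \<Rightarrow> real" and B B' :: "'v \<Rightarrow> real \<Rightarrow> real"
    and phi phi2 :: "'v \<Rightarrow> 'v \<Rightarrow> 'k \<Rightarrow> real" and y y2 t t2 dT :: "'v \<Rightarrow> 'k \<Rightarrow> real"
  assumes finV: "finite V" and finC: "finite C"
    and E_sub: "E \<subseteq> V \<times> V" and E_sym: "\<And>i j. (i, j) \<in> E \<Longrightarrow> (j, i) \<in> E"
    and S_ok: "\<And>k. k \<in> C \<Longrightarrow> S k \<noteq> {} \<and> S k \<subseteq> V"
    and r_nonneg: "\<And>i k. i \<in> V \<Longrightarrow> k \<in> C \<Longrightarrow> 0 \<le> r i k"
    and D_deriv: "\<And>i j x. (i, j) \<in> E \<Longrightarrow> 0 \<le> x \<Longrightarrow>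
                    (D i j has_real_derivative D' i j x) (at x within {0..})"
    and D'_cont: "\<And>i j. (i, j) \<in> E \<Longrightarrow> continuous_on {0..} (D' i j)"
    and D_mono: "\<And>i j. (i, j) \<in> E \<Longrightarrow> mono_on {0..} (D i j)"
    and D_convex: "\<And>i j. (i, j) \<in> E \<Longrightarrow> convex_on {0..} (D i j)"
    and D_zero: "\<And>i j. (i, j) \<in> E \<Longrightarrow> D i j 0 = 0"
    and B_deriv: "\<And>i x. i \<in> V \<Longrightarrow> 0 \<le> x \<Longrightarrow>
                    (B i has_real_derivative B' i x) (at x within {0..})"
    and B'_cont: "\<And>i. i \<in> V \<Longrightarrow> continuous_on {0..} (B' i)"
    and B_mono: "\<And>i. i \<in> V \<Longrightarrow> mono_on {0..} (B i)"
    and B_convex: "\<And>i. i \<in> V \<Longrightarrow> convex_on {0..} (B i)"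
    and B_zero: "\<And>i. i \<in> V \<Longrightarrow> B i 0 = 0"
    and feas: "feasible V E C S r phi y" and t_rates: "arrival_rates V C r phi t"
    and dT_rec: "\<And>i k. i \<in> V \<Longrightarrow> k \<in> C \<Longrightarrow>
        dT i k = (\<Sum>j\<in>nbrs E i. phi i j k * (D' j i (link_flow C t phi j i) + dT j k))"
    and dT_zero: "\<And>i k. i \<in> V \<Longrightarrow> k \<in> C \<Longrightarrow> i \<in> S k \<or> y i k = 1 \<Longrightarrow> dT i k = 0"
    and cache_pos: "\<And>i k. i \<in> V \<Longrightarrow> k \<in> C \<Longrightarrow> y i k > 0 \<Longrightarrow>
        ereal (B' i (cache_total C y i)) = ereal (t i k) * delta E C D' B' t phi y dT i k"
    and cache_zero: "\<And>i k. i \<in> V \<Longrightarrow> k \<in> C \<Longrightarrow> y i k = 0 \<Longrightarrow>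
        ereal (B' i (cache_total C y i)) \<ge> ereal (t i k) * delta E C D' B' t phi y dT i k"
    and route_pos: "\<And>i k j. i \<in> V \<Longrightarrow> k \<in> C \<Longrightarrow> j \<in> nbrs E i \<Longrightarrow> phi i j k > 0 \<Longrightarrow>
        ereal (D' j i (link_flow C t phi j i) + dT j k) = delta E C D' B' t phi y dT i k"
    and route_zero: "\<And>i k j. i \<in> V \<Longrightarrow> k \<in> C \<Longrightarrow> j \<in> nbrs E i \<Longrightarrow> phi i j k = 0 \<Longrightarrow>
        ereal (D' j i (link_flow C t phi j i) + dT j k) \<ge> delta E C D' B' t phi y dT i k"
    and feas2: "feasible V E C S r phi2 y2" and t2_rates: "arrival_rates V C r phi2 t2"
  shows "ereal (total_cost V E C D B t2 phi2 y2 - total_cost V E C D B t phi y)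
           \<ge> (\<Sum>i\<in>V. \<Sum>k\<in>C. delta E C D' B' t phi y dT i k
                               * ereal ((y i k - y2 i k) * (t2 i k - t i k)))"
  proof -
  define F where "F = link_flow C t phi"
  define F2 where "F2 = link_flow C t2 phi2"
  define Y where "Y = cache_total C y"
  define Y2 where "Y2 = cache_total C y2"
  have nbV: "\<And>i. nbrs E i \<subseteq> V" using E_sub by (auto simp: nbrs_def)
  have finE: "finite E" using E_sub finV by (meson finite_SigmaI finite_subset)
  have ph: "\<And>k i j. k \<in> C \<Longrightarrow> 0 \<le> phi i j k \<and> ((i, j) \<notin> E \<longrightarrow> phi i j k = 0)"
    using feas unfolding feasible_def by blast
  have ph2: "\<And>k i j. k \<in> C \<Longrightarrow> 0 \<le> phi2 i j k \<and> ((i, j) \<notin> E \<longrightarrow> phi2 i j k = 0)"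
    using feas2 unfolding feasible_def by blast
  have yb: "\<And>k i. k \<in> C \<Longrightarrow> i \<in> V \<Longrightarrow> 0 \<le> y i k"
    using feas unfolding feasible_def by blast
  have yb2: "\<And>k i. k \<in> C \<Longrightarrow> i \<in> V \<Longrightarrow> 0 \<le> y2 i k"
    using feas2 unfolding feasible_def by blast
  have cons: "\<And>k i. k \<in> C \<Longrightarrow> i \<in> V \<Longrightarrow> y i k + (\<Sum>j\<in>V. phi i j k) = (if i \<in> S k then 0 else 1)"
    using feas unfolding feasible_def by blast
  have cons2: "\<And>k i. k \<in> C \<Longrightarrow> i \<in> V \<Longrightarrow> y2 i k + (\<Sum>j\<in>V. phi2 i j k) = (if i \<in> S k then 0 else 1)"
    using feas2 unfolding feasible_def by blast
  have sol: "\<And>k. k \<in> C \<Longrightarrow> solves_arrival V r phi k (\<lambda>i. t i k)"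
    using t_rates unfolding arrival_rates_def by blast
  have sol2: "\<And>k. k \<in> C \<Longrightarrow> solves_arrival V r phi2 k (\<lambda>i. t2 i k)"
    using t2_rates unfolding arrival_rates_def by blast
  have tnn: "\<And>k i. k \<in> C \<Longrightarrow> i \<in> V \<Longrightarrow> 0 \<le> t i k"
  proof -
    fix k i assume k: "k \<in> C" and i: "i \<in> V"
    have "\<forall>s. solves_arrival V r phi k s \<longrightarrow> (\<forall>i\<in>V. 0 \<le> s i)"
      using feas k unfolding feasible_def by blast
    then show "0 \<le> t i k" using sol[OF k] i by blast
  qed
  have tnn2: "\<And>k i. k \<in> C \<Longrightarrow> i \<in> V \<Longrightarrow> 0 \<le> t2 i k"
  proof -
    fix k i assume k: "k \<in> C" and i: "i \<in> V"
    have "\<forall>s. solves_arrival V r phi2 k s \<longrightarrow> (\<forall>i\<in>V. 0 \<le> s i)"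
      using feas2 k unfolding feasible_def by blast
    then show "0 \<le> t2 i k" using sol2[OF k] i by blast
  qed
  have sVN: "(\<Sum>j\<in>V. phi i j k * g j) = (\<Sum>j\<in>nbrs E i. phi i j k * g j)"
    if "k \<in> C" for i k g
    using that finV nbV ph by (intro sum.mono_neutral_right) (auto simp: nbrs_def)
  have sVN2: "(\<Sum>j\<in>V. phi2 i j k * g j) = (\<Sum>j\<in>nbrs E i. phi2 i j k * g j)"
    if "k \<in> C" for i k g
    using that finV nbV ph2 by (intro sum.mono_neutral_right) (auto simp: nbrs_def)
  have Fnn: "0 \<le> F a b" if "(a, b) \<in> E" for a b
    using that E_sub tnn ph unfolding F_def link_flow_def by (force intro: sum_nonneg)
  have F2nn: "0 \<le> F2 a b" if "(a, b) \<in> E" for a b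
    using that E_sub tnn2 ph2 unfolding F2_def link_flow_def by (force intro: sum_nonneg)
  have Ynn: "0 \<le> Y i" if "i \<in> V" for i
    using that yb unfolding Y_def cache_total_def by (force intro: sum_nonneg)
  have Y2nn: "0 \<le> Y2 i" if "i \<in> V" for i
    using that yb2 unfolding Y2_def cache_total_def by (force intro: sum_nonneg)
  define L where "L = (\<Sum>x\<in>E. D' (fst x) (snd x) (F (fst x) (snd x)) * (F2 (fst x) (snd x) - F (fst x) (snd x)))
      + (\<Sum>i\<in>V. B' i (Y i) * (Y2 i - Y i))"
  have step1: "L \<le> total_cost V E C D B t2 phi2 y2 - total_cost V E C D B t phi y"
  proof -
    have a: "(\<Sum>x\<in>E. D' (fst x) (snd x) (F (fst x) (snd x)) * (F2 (fst x) (snd x) - F (fst x) (snd x)))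
       \<le> (\<Sum>x\<in>E. D (fst x) (snd x) (F2 (fst x) (snd x)) - D (fst x) (snd x) (F (fst x) (snd x)))"
    proof (rule sum_mono)
      fix x assume x: "x \<in> E"
      obtain a b where ab: "x = (a, b)" by force
      show "D' (fst x) (snd x) (F (fst x) (snd x)) * (F2 (fst x) (snd x) - F (fst x) (snd x))
          \<le> D (fst x) (snd x) (F2 (fst x) (snd x)) - D (fst x) (snd x) (F (fst x) (snd x))"
        using x unfolding ab by (auto intro!: tangent D_convex D_deriv Fnn F2nn)
    qed
    have b: "(\<Sum>i\<in>V. B' i (Y i) * (Y2 i - Y i)) \<le> (\<Sum>i\<in>V. B i (Y2 i) - B i (Y i))"
      by (rule sum_mono) (auto intro!: tangent B_convex B_deriv Ynn Y2nn)
    show ?thesis using a b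
      unfolding L_def total_cost_def F_def[symmetric] F2_def[symmetric] Y_def[symmetric] Y2_def[symmetric]
      by (simp add: split_def sum_subtractf)
  qed
  define Q where "Q i k = t2 i k * ((\<Sum>j\<in>V. phi2 i j k * (D' j i (F j i) + dT j k)) - dT i k)
       + B' i (Y i) * (y2 i k - y i k)" for i k
  have edge: "(\<Sum>x\<in>E. D' (fst x) (snd x) (F (fst x) (snd x)) * (F2 (fst x) (snd x) - F (fst x) (snd x)))
     = (\<Sum>k\<in>C. \<Sum>i\<in>V. \<Sum>j\<in>V. D' j i (F j i) * (t2 i k * phi2 i j k - t i k * phi i j k))"
  proof -
    have "(\<Sum>x\<in>E. D' (fst x) (snd x) (F (fst x) (snd x)) * (F2 (fst x) (snd x) - F (fst x) (snd x)))
       = (\<Sum>x\<in>V\<times>V. D' (fst x) (snd x) (F (fst x) (snd x)) * (F2 (fst x) (snd x) - F (fst x) (snd x)))"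
    proof (rule sum.mono_neutral_left)
      show "finite (V \<times> V)" using finV by simp
      show "E \<subseteq> V \<times> V" by (rule E_sub)
      show "\<forall>x\<in>V \<times> V - E. D' (fst x) (snd x) (F (fst x) (snd x)) * (F2 (fst x) (snd x) - F (fst x) (snd x)) = 0"
      proof
        fix x assume x: "x \<in> V \<times> V - E"
        then have nE: "(snd x, fst x) \<notin> E" using E_sym by (metis DiffD2 prod.collapse)
        have "F (fst x) (snd x) = 0" unfolding F_def link_flow_def using ph nE by (intro sum.neutral) auto
        moreover have "F2 (fst x) (snd x) = 0" unfolding F2_def link_flow_def using ph2 nE by (intro sum.neutral) auto
        ultimately show "D' (fst x) (snd x) (F (fst x) (snd x)) * (F2 (fst x) (snd x) - F (fst x) (snd x)) = 0" by simp
      qed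
    qed
    also have "\<dots> = (\<Sum>a\<in>V. \<Sum>b\<in>V. D' a b (F a b) * (F2 a b - F a b))"
      by (simp add: sum.cartesian_product split_def)
    also have "\<dots> = (\<Sum>a\<in>V. \<Sum>b\<in>V. \<Sum>k\<in>C. D' a b (F a b) * (t2 b k * phi2 b a k - t b k * phi b a k))"
    proof -
      have fd: "F2 a b - F a b = (\<Sum>k\<in>C. t2 b k * phi2 b a k - t b k * phi b a k)" for a b
        by (simp add: F_def F2_def link_flow_def sum_subtractf)
      show ?thesis by (simp add: fd sum_distrib_left)
    qed
    also have "\<dots> = (\<Sum>a\<in>V. \<Sum>k\<in>C. \<Sum>b\<in>V. D' a b (F a b) * (t2 b k * phi2 b a k - t b k * phi b a k))"
      by (intro sum.cong refl sum.swap)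
    also have "\<dots> = (\<Sum>k\<in>C. \<Sum>a\<in>V. \<Sum>b\<in>V. D' a b (F a b) * (t2 b k * phi2 b a k - t b k * phi b a k))"
      by (rule sum.swap)
    also have "\<dots> = (\<Sum>k\<in>C. \<Sum>b\<in>V. \<Sum>a\<in>V. D' a b (F a b) * (t2 b k * phi2 b a k - t b k * phi b a k))"
      by (intro sum.cong refl sum.swap)
    finally show ?thesis .
  qed
  have kid: "(\<Sum>i\<in>V. \<Sum>j\<in>V. D' j i (F j i) * (t2 i k * phi2 i j k - t i k * phi i j k))
      = (\<Sum>i\<in>V. t2 i k * ((\<Sum>j\<in>V. phi2 i j k * (D' j i (F j i) + dT j k)) - dT i k))"
    if k: "k \<in> C" for k
  proof -
    have h1: "\<forall>i\<in>V. t i k = r i k + (\<Sum>j\<in>V. t j k * phi j i k)"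
      using sol[OF k] unfolding solves_arrival_def by blast
    have h2: "\<forall>i\<in>V. t2 i k = r i k + (\<Sum>j\<in>V. t2 j k * phi2 j i k)"
      using sol2[OF k] unfolding solves_arrival_def by blast
    have h3: "\<forall>i\<in>V. dT i k = (\<Sum>j\<in>V. phi i j k * (D' j i (F j i) + dT j k))"
    proof
      fix i assume i: "i \<in> V"
      show "dT i k = (\<Sum>j\<in>V. phi i j k * (D' j i (F j i) + dT j k))"
        using dT_rec[OF i k] sVN[OF k, of i "\<lambda>j. D' j i (F j i) + dT j k"] unfolding F_def by simp
    qed
    show ?thesis
      by (rule key_identity[OF finV h1 h2 h3])
  qed
  have cache: "(\<Sum>i\<in>V. B' i (Y i) * (Y2 i - Y i)) = (\<Sum>i\<in>V. \<Sum>k\<in>C. B' i (Y i) * (y2 i k - y i k))"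
  proof -
    have "Y2 i - Y i = (\<Sum>k\<in>C. y2 i k - y i k)" for i
      by (simp add: Y_def Y2_def cache_total_def sum_subtractf)
    then show ?thesis by (simp add: sum_distrib_left)
  qed
  have step2: "L = (\<Sum>i\<in>V. \<Sum>k\<in>C. Q i k)"
  proof -
    have "L = (\<Sum>k\<in>C. \<Sum>i\<in>V. t2 i k * ((\<Sum>j\<in>V. phi2 i j k * (D' j i (F j i) + dT j k)) - dT i k))
        + (\<Sum>i\<in>V. \<Sum>k\<in>C. B' i (Y i) * (y2 i k - y i k))"
      unfolding L_def edge cache using kid by simp
    also have "\<dots> = (\<Sum>i\<in>V. \<Sum>k\<in>C. t2 i k * ((\<Sum>j\<in>V. phi2 i j k * (D' j i (F j i) + dT j k)) - dT i k))
        + (\<Sum>i\<in>V. \<Sum>k\<in>C. B' i (Y i) * (y2 i k - y i k))"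
      by (subst sum.swap) simp
    also have "\<dots> = (\<Sum>i\<in>V. \<Sum>k\<in>C. Q i k)"
      unfolding Q_def by (simp add: sum.distrib)
    finally show ?thesis .
  qed
  have step3: "delta E C D' B' t phi y dT i k * ereal ((y i k - y2 i k) * (t2 i k - t i k)) \<le> ereal (Q i k)"
    if i: "i \<in> V" and k: "k \<in> C" for i k
  proof -
    have Qn: "Q i k = t2 i k * ((\<Sum>j\<in>nbrs E i. phi2 i j k * (D' j i (F j i) + dT j k)) - dT i k)
       + B' i (Y i) * (y2 i k - y i k)"
      unfolding Q_def using sVN2[OF k] by simp
    have nm: "delta E C D' B' t phi y dT i k \<noteq> -\<infinity>"
      unfolding delta_def using inf_ne_minf[OF finite_subset[OF nbV finV]]
      by (auto simp: min_def)
    show ?thesis unfolding Qn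
    proof (rule local_ineq[where s="if i \<in> S k then 0 else 1"])
      show "finite (nbrs E i)" using finite_subset[OF nbV finV] .
      show "\<forall>j\<in>nbrs E i. 0 \<le> phi i j k" using ph k by blast
      show "\<forall>j\<in>nbrs E i. 0 \<le> phi2 i j k" using ph2 k by blast
      show "0 \<le> t i k" "0 \<le> t2 i k" "0 \<le> y i k" "0 \<le> y2 i k"
        using tnn tnn2 yb yb2 i k by auto
      show "sum (\<lambda>j. phi i j k) (nbrs E i) = (if i \<in> S k then 0 else 1) - y i k"
        using cons[OF k i] sVN[OF k, of i "\<lambda>_. 1"] by simp
      show "sum (\<lambda>j. phi2 i j k) (nbrs E i) = (if i \<in> S k then 0 else 1) - y2 i k"
        using cons2[OF k i] sVN2[OF k, of i "\<lambda>_. 1"] by simp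
      show "dT i k = (\<Sum>j\<in>nbrs E i. phi i j k * (D' j i (F j i) + dT j k))"
        using dT_rec[OF i k] unfolding F_def .
      show "\<forall>j\<in>nbrs E i. phi i j k > 0 \<longrightarrow> ereal (D' j i (F j i) + dT j k) = delta E C D' B' t phi y dT i k"
        using route_pos[OF i k] unfolding F_def by blast
      show "\<forall>j\<in>nbrs E i. phi i j k = 0 \<longrightarrow> ereal (D' j i (F j i) + dT j k) \<ge> delta E C D' B' t phi y dT i k"
        using route_zero[OF i k] unfolding F_def by blast
      show "y i k > 0 \<longrightarrow> ereal (B' i (Y i)) = ereal (t i k) * delta E C D' B' t phi y dT i k"
        using cache_pos[OF i k] unfolding Y_def by blast
      show "y i k = 0 \<longrightarrow> ereal (B' i (Y i)) \<ge> ereal (t i k) * delta E C D' B' t phi y dT i k"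
        using cache_zero[OF i k] unfolding Y_def by blast
      show "delta E C D' B' t phi y dT i k \<noteq> -\<infinity>" by (rule nm)
    qed
  qed
  have "(\<Sum>i\<in>V. \<Sum>k\<in>C. delta E C D' B' t phi y dT i k * ereal ((y i k - y2 i k) * (t2 i k - t i k)))
      \<le> (\<Sum>i\<in>V. \<Sum>k\<in>C. ereal (Q i k))"
    using step3 by (intro sum_mono) auto
  also have "\<dots> = ereal L" using step2 by simp
  also have "\<dots> \<le> ereal (total_cost V E C D B t2 phi2 y2 - total_cost V E C D B t phi y)"
    using step1 by simp
  finally show ?thesis .
qed

end
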